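(* Let $\mathcal{X}$ be a compact set equipped with a probability measure $\mu$ (e.g. the uniform distribution). Let $\pi:\mathcal{X}\to(0,1)$ be measurable with $m:=\inf_{x}\pi(x)>0$, and set $L_\pi:=1/m$. Let $\hat\pi:\mathcal{X}\to\mathbb{R}$ and $\sigma:\mathcal{X}\to[0,\infty)$ be measurable and $\beta\ge0$ such that $|\pi(x)-\hat\pi(x)|\le\beta\sigma(x)$ for all $x\in\mathcal{X}$. Define $u(x):=\min\{1,\max\{0,\hat\pi(x)+\beta\sigma(x)\}\}$, the densities (w.r.t. $\mu$) $\hat p(x):=u(x)/\int u\,d\mu$ and $\ell(x):=\pi(x)/\int\pi\,d\mu$. Then $$\mathrm{KL}(\hat p\,\|\,\ell)\le 2L_\pi\,\beta\,\mathbb{E}_{x\sim\hat p}[\sigma(x)].$$ In particular, in the batch BORE++ setting, with $\hat\pi=\hat\pi_{t-1}$, $\sigma=\sigma_{t-1}$, $\beta=\beta_{t-1}(\delta)$ on the high-probability event of the confidence bound, the target batch-sampling distribution $\hat p_t\propto\pi_{t-1,\delta}$ satisfies $\mathrm{KL}(\hat p_t\|\ell)\le 2L_\pi\beta_{t-1}(\delta)\mathbb{E}_{\hat p_t}[\sigma_{t-1}]$, where $\ell(x)=p(x\mid y\le\tau)$.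
   Context: $\mathrm{KL}(p\|q):=\mathbb{E}_{x\sim p}[\log p(x)-\log q(x)]$. Note $u\ge\pi>0$ under the hypothesis, so $\hat p$ is well defined. In the batch BORE++ setting, $\pi(x)=\Phi_\epsilon(\tau-f(x))=p(y\le\tau\mid x)$ and $\pi_{t,\delta}:=\min\{1,\max\{0,\hat\pi_t+\beta_t(\delta)\sigma_t\}\}$ with $\hat\pi_t,\sigma_t,\beta_t$ the kernel least-squares estimator, posterior standard deviation and confidence width computed from all observations collected so far. *)

theory Defs
  imports "HOL-Probability.Probability"
begin

definition clip_ucb :: "('a \<Rightarrow> real) \<Rightarrow> real \<Rightarrow> ('a \<Rightarrow> real) \<Rightarrow> 'a \<Rightarrow> real" where
  "clip_ucb pihat beta sd x = min 1 (max 0 (pihat x + beta * sd x))"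

definition normalize_density :: "'a measure \<Rightarrow> ('a \<Rightarrow> real) \<Rightarrow> 'a \<Rightarrow> real" where
  "normalize_density M f x = f x / (\<integral>y. f y \<partial>M)"

definition KL_dens :: "'a measure \<Rightarrow> ('a \<Rightarrow> real) \<Rightarrow> ('a \<Rightarrow> real) \<Rightarrow> real" where
  "KL_dens M p q = (\<integral>x. p x * (ln (p x) - ln (q x)) \<partial>M)"

end

theory Submission
  imports Defs
begin

lemma ptwise:
  fixes a b Zu Zp m sg bt :: real
  assumes "0 < b" "b \<le> a" "a \<le> 1" "m \<le> b" "0 < m" "0 < Zp" "Zp \<le> Zu"
    "a - b \<le> 2 * bt * sg"
  shows "a / Zu * (ln (a / Zu) - ln (b / Zp)) \<le> 2 * (1 / m) * bt * (a / Zu * sg)"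
proof -
  have Zu: "0 < Zu" using assms by linarith
  have a: "0 < a" using assms by linarith
  have e: "ln (a / Zu) - ln (b / Zp) = ln (a/b) - ln (Zu / Zp)"
    using Zu a assms by (simp add: ln_div)
  have "ln (Zu/Zp) \<ge> 0" using assms by simp
  moreover have "ln (a/b) \<le> a/b - 1" using a assms by (intro ln_le_minus_one) simp
  moreover have "a/b - 1 = (a - b) / b" using assms by (simp add: field_simps)
  moreover have "(a - b) / b \<le> (2 * bt * sg) / b" using assms by (simp add: divide_right_mono)
  moreover have "(2 * bt * sg) / b \<le> (2 * bt * sg) / m"
  proof (cases "2 * bt * sg \<ge> 0")
    case True thus ?thesis using assms by (intro divide_left_mono) auto
  next
    case False thus ?thesis using assms by linarith
  qed
  ultimately have "ln (a / Zu) - ln (b / Zp) \<le> 2 * (1/m) * bt * sg" unfolding e by simp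
  hence "a / Zu * (ln (a / Zu) - ln (b / Zp)) \<le> a / Zu * (2 * (1/m) * bt * sg)"
    using a Zu by (intro mult_left_mono) auto
  thus ?thesis by (simp add: algebra_simps)
qed

theorem mainTheorem5:
  fixes M :: "'a::topological_space measure"
    and pi pihat sd :: "'a \<Rightarrow> real"
    and beta :: real
  assumes "prob_space M"
    and "compact (space M)"
    and "sets M = sets (restrict_space borel (space M))"
    and "pi \<in> borel_measurable M"
    and "\<And>x. x \<in> space M \<Longrightarrow> 0 < pi x \<and> pi x < 1"
    and "(INF x\<in>space M. pi x) > 0"
    and "pihat \<in> borel_measurable M"
    and "sd \<in> borel_measurable M"
    and "\<And>x. x \<in> space M \<Longrightarrow> sd x \<ge> 0"
    and "beta \<ge> 0"
    and "\<And>x. x \<in> space M \<Longrightarrow> \<bar>pi x - pihat x\<bar> \<le> beta * sd x"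
  shows "ennreal (KL_dens M (normalize_density M (clip_ucb pihat beta sd))
                             (normalize_density M pi))
         \<le> ennreal (2 * (1 / (INF x\<in>space M. pi x)) * beta)
            * (\<integral>\<^sup>+ x. ennreal (normalize_density M (clip_ucb pihat beta sd) x * sd x) \<partial>M)"
proof -
  interpret P: prob_space M by fact
  define m where "m = (INF x\<in>space M. pi x)"
  define u where "u = clip_ucb pihat beta sd"
  define Zu where "Zu = (\<integral>y. u y \<partial>M)"
  define Zp where "Zp = (\<integral>y. pi y \<partial>M)"
  define c where "c = 2 * (1 / m) * beta"
  have m0: "0 < m" using assms(6) m_def by simp
  have mle: "m \<le> pi x" if "x \<in> space M" for x
    unfolding m_def using that assms(5) by (intro cINF_lower) (auto simp: bdd_below_def intro!: exI[where x=0] less_imp_le)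
  have umeas: "u \<in> borel_measurable M" unfolding u_def clip_ucb_def
    using assms(7,8) by measurable
  have ub: "pi x \<le> u x \<and> u x \<le> 1 \<and> u x - pi x \<le> 2 * beta * sd x" if "x \<in> space M" for x
    using assms(5,11)[OF that] unfolding u_def clip_ucb_def by (auto simp: abs_le_iff)
  have uabs: "norm (u x) \<le> 1" if "x \<in> space M" for x
    using ub[OF that] assms(5)[OF that] by auto
  have uint: "integrable M u"
    by (rule P.integrable_const_bound[where B=1]) (use umeas uabs in \<open>auto intro!: AE_I2\<close>)
  have pint: "integrable M pi"
    by (rule P.integrable_const_bound[where B=1]) (use assms(4) in \<open>auto intro!: AE_I2 simp: abs_le_iff dest!: assms(5)\<close>)
  have "(\<integral>y. m \<partial>M) \<le> Zp" unfolding Zp_def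
    by (rule integral_mono) (use pint mle in auto)
  hence Zp0: "0 < Zp" using m0 by (simp add: P.prob_space)
  have ZpZu: "Zp \<le> Zu" unfolding Zp_def Zu_def
    by (rule integral_mono) (use pint uint ub in auto)
  define f where "f = (\<lambda>x. normalize_density M u x * (ln (normalize_density M u x) - ln (normalize_density M pi x)))"
  have fle: "f x \<le> c * (normalize_density M u x * sd x)" if "x \<in> space M" for x
    unfolding f_def normalize_density_def c_def Zu_def[symmetric] Zp_def[symmetric]
    using ptwise[of "pi x" "u x" m Zp Zu beta "sd x"] ub[OF that] assms(5)[OF that] mle[OF that] m0 Zp0 ZpZu
    by auto
  have KL: "KL_dens M (normalize_density M u) (normalize_density M pi) = (\<integral>x. f x \<partial>M)"
    unfolding KL_dens_def f_def ..
  have "ennreal (\<integral>x. f x \<partial>M) \<le> ennreal c * (\<integral>\<^sup>+ x. ennreal (normalize_density M u x * sd x) \<partial>M)"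
  proof (cases "integrable M f")
    case False thus ?thesis by (simp add: not_integrable_integral_eq)
  next
    case True
    have "(\<integral>x. f x \<partial>M) \<le> (\<integral>x. max 0 (f x) \<partial>M)"
      by (rule integral_mono) (use True in auto)
    hence "ennreal (\<integral>x. f x \<partial>M) \<le> ennreal (\<integral>x. max 0 (f x) \<partial>M)" by (rule ennreal_leI)
    also have "\<dots> = (\<integral>\<^sup>+ x. ennreal (max 0 (f x)) \<partial>M)"
      by (rule nn_integral_eq_integral[symmetric]) (use True in auto)
    also have "\<dots> \<le> (\<integral>\<^sup>+ x. ennreal c * ennreal (normalize_density M u x * sd x) \<partial>M)"
    proof (rule nn_integral_mono)
      fix x assume x: "x \<in> space M"
      have "max 0 (f x) \<le> c * (normalize_density M u x * sd x)"
        using fle[OF x] m0 assms(10) assms(9)[OF x] ub[OF x] assms(5)[OF x] Zp0 ZpZu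
        unfolding c_def normalize_density_def Zu_def[symmetric]
        by (auto intro!: mult_nonneg_nonneg divide_nonneg_pos)
      moreover have "c \<ge> 0" using m0 assms(10) unfolding c_def by simp
      ultimately show "ennreal (max 0 (f x)) \<le> ennreal c * ennreal (normalize_density M u x * sd x)"
        by (simp add: ennreal_mult'[symmetric] ennreal_leI)
    qed
    also have "\<dots> = ennreal c * (\<integral>\<^sup>+ x. ennreal (normalize_density M u x * sd x) \<partial>M)"
      by (rule nn_integral_cmult) (use umeas assms(8) in \<open>simp add: normalize_density_def\<close>)
    finally show ?thesis .
  qed
  thus ?thesis using KL unfolding c_def m_def u_def by simp
qed

end
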